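(* Let $\mathscr H$ be a real Hilbert space, $\mathscr A\subseteq\mathscr H$ a closed linear subspace, $\mathsf Z$ a countable index set and $(h_k)_{k\in\mathsf Z}$ an orthogonal family of nonzero vectors of $\mathscr H$. Put $\hat h_k:=h_k/\|h_k\|$ and define the bounded linear operator $\hat S:\mathscr A\to\ell^2(\mathsf Z)$, $\hat S u:=(\langle u,\hat h_k\rangle)_{k\in\mathsf Z}$. Assume that the range $\mathrm{ran}(\hat S)$ is closed in $\ell^2(\mathsf Z)$. Let $\mathbf s=(\mathrm s_k)_{k\in\mathsf Z}$ be a real sequence whose normalized version $\hat{\mathbf s}:=(\mathrm s_k/\|h_k\|)_{k\in\mathsf Z}$ lies in $\ell^2(\mathsf Z)$, and let $u^{(0)}\in\mathscr A$. Then $(P_{\mathscr A}P_{\mathscr C_{\mathbf s}})^n u^{(0)}$ converges in norm as $n\to\infty$ and $$\lim_{n\to\infty}(P_{\mathscr A}P_{\mathscr C_{\mathbf s}})^n u^{(0)}=P_{\mathscr A\cap\mathscr C_{\bar{\mathbf s}}}\,u^{(0)}=u^{(0)}+\hat S^\dagger\big(\hat{\mathbf s}-\hat S u^{(0)}\big),$$ where $\bar{\mathbf s}=(\bar{\mathrm s}_k)_{k\in\mathsf Z}$ is the sequence defined by $\bar{\mathrm s}_k:=\|h_k\|\,\mathrm q_k$, with $(\mathrm q_k)_{k\in\mathsf Z}$ the orthogonal projection of $\hat{\mathbf s}$ onto $\mathrm{ran}(\hat S)$ in $\ell^2(\mathsf Z)$ (in particular $\mathscr A\cap\mathscr C_{\bar{\mathbf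 s}}\neq\emptyset$), and $\hat S^\dagger$ is the Moore–Penrose pseudo-inverse of $\hat S$.
   Context: For a real sequence $\mathbf t=(\mathrm t_k)_{k\in\mathsf Z}$, $\mathscr C_{\mathbf t}:=\{v\in\mathscr H:\ \langle v,h_k\rangle=\mathrm t_k\ \forall k\in\mathsf Z\}$. $P_{\mathscr V}$ denotes orthogonal projection (nearest-point map) onto a nonempty closed affine subspace $\mathscr V$; $P_{\mathscr A}$ is the orthogonal projection onto $\mathscr A$. $\ell^2(\mathsf Z)$ has its canonical norm $\|\cdot\|_2$. The Moore–Penrose pseudo-inverse is defined, for $\mathbf c\in\ell^2(\mathsf Z)$, by $\hat S^\dagger\mathbf c:=\arg\min_{v\in\mathscr M_{\mathbf c}}\|v\|$, where $\mathscr M_{\mathbf c}:=\{v\in\mathscr A:\ \|\hat S v-\mathbf c\|_2\ \text{is minimal}\}$. *)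

theory Defs
  imports "HOL-Analysis.Analysis"
begin

definition nearest :: "'a::real_inner set \<Rightarrow> 'a \<Rightarrow> 'a" where
  "nearest V x = (THE y. y \<in> V \<and> (\<forall>z\<in>V. norm (x - y) \<le> norm (x - z)))"

definition l2 :: "'z set \<Rightarrow> ('z \<Rightarrow> real) set" where
  "l2 Z = {c. (\<forall>k. k \<notin> Z \<longrightarrow> c k = 0) \<and> (\<lambda>k. (c k)\<^sup>2) summable_on Z}"

definition l2norm :: "'z set \<Rightarrow> ('z \<Rightarrow> real) \<Rightarrow> real" where
  "l2norm Z c = sqrt (\<Sum>\<^sub>\<infinity>k\<in>Z. (c k)\<^sup>2)"

definition l2_closed :: "'z set \<Rightarrow> ('z \<Rightarrow> real) set \<Rightarrow> bool" where
  "l2_closed Z S \<longleftrightarrow> (\<forall>f c. (\<forall>n. f n \<in> S) \<and> c \<in> l2 Z \<and>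
      (\<lambda>n. l2norm Z (f n - c)) \<longlonglongrightarrow> 0 \<longrightarrow> c \<in> S)"

definition l2_proj :: "'z set \<Rightarrow> ('z \<Rightarrow> real) set \<Rightarrow> ('z \<Rightarrow> real) \<Rightarrow> ('z \<Rightarrow> real)" where
  "l2_proj Z S c = (THE q. q \<in> S \<and> (\<forall>r\<in>S. l2norm Z (c - q) \<le> l2norm Z (c - r)))"

definition Cset :: "'z set \<Rightarrow> ('z \<Rightarrow> 'a::real_inner) \<Rightarrow> ('z \<Rightarrow> real) \<Rightarrow> 'a set" where
  "Cset Z h t = {v. \<forall>k\<in>Z. inner v (h k) = t k}"

definition Shat :: "'z set \<Rightarrow> ('z \<Rightarrow> 'a::real_inner) \<Rightarrow> 'a \<Rightarrow> ('z \<Rightarrow> real)" where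
  "Shat Z h u = (\<lambda>k. if k \<in> Z then inner u (h k /\<^sub>R norm (h k)) else 0)"

definition Mset :: "'a::real_inner set \<Rightarrow> 'z set \<Rightarrow> ('z \<Rightarrow> 'a) \<Rightarrow> ('z \<Rightarrow> real) \<Rightarrow> 'a set" where
  "Mset A Z h c = {v \<in> A. \<forall>w\<in>A. l2norm Z (Shat Z h v - c) \<le> l2norm Z (Shat Z h w - c)}"

definition Shat_pinv :: "'a::real_inner set \<Rightarrow> 'z set \<Rightarrow> ('z \<Rightarrow> 'a) \<Rightarrow> ('z \<Rightarrow> real) \<Rightarrow> 'a" where
  "Shat_pinv A Z h c = (THE v. v \<in> Mset A Z h c \<and> (\<forall>w\<in>Mset A Z h c. norm v \<le> norm w))"

end

theory Submission
  imports Defs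
begin


lemma has_sum_diff':
  fixes f g :: "'b \<Rightarrow> 'a::real_normed_vector"
  assumes "(f has_sum a) S" "(g has_sum b) S"
  shows "((\<lambda>x. f x - g x) has_sum (a - b)) S"
proof -
  have "((\<lambda>x. - g x) has_sum (- b)) S" using assms(2) by (simp add: has_sum_uminus)
  from has_sum_add[OF assms(1) this] show ?thesis by simp
qed

lemma pyth_orth:
  fixes x y v :: "'a::real_inner"
  assumes "inner (x - y) (v - y) = 0"
  shows "norm (x - v)^2 = norm (x - y)^2 + norm (v - y)^2"
proof -
  have "x - v = (x - y) - (v - y)" by simp
  then have "norm (x - v)^2 = inner ((x - y) - (v - y)) ((x - y) - (v - y))"
    by (metis power2_norm_eq_inner)
  also have "\<dots> = inner (x-y) (x-y) - 2 * inner (x - y) (v - y) + inner (v-y) (v-y)"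
    by (simp add: inner_diff_left inner_diff_right inner_commute)
  also have "\<dots> = norm (x - y)^2 + norm (v - y)^2"
    using assms by (simp add: power2_norm_eq_inner)
  finally show ?thesis .
qed

lemma near_min:
  fixes x y v :: "'a::real_inner"
  assumes "\<forall>v\<in>V. inner (x - y) (v - y) = 0" "v \<in> V"
  shows "norm (x - y) \<le> norm (x - v)"
proof -
  have "norm (x - y)^2 \<le> norm (x - v)^2" using pyth_orth[of x y v] assms by simp
  then show ?thesis by (simp add: power2_le_iff_abs_le)
qed

lemma near_uniq:
  fixes x y v :: "'a::real_inner"
  assumes "\<forall>v\<in>V. inner (x - y) (v - y) = 0" "v \<in> V" "norm (x - v) \<le> norm (x - y)"
  shows "v = y"
proof -
  have "norm (x - v)^2 \<le> norm (x - y)^2" using assms(3) by (simp add: power_mono)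
  then have "norm (v - y)^2 \<le> 0" using pyth_orth[of x y v] assms by simp
  then show ?thesis by simp
qed

lemma nearest_char:
  fixes x y :: "'a::real_inner"
  assumes "y \<in> V" "\<forall>v\<in>V. inner (x - y) (v - y) = 0"
  shows "nearest V x = y"
  unfolding nearest_def
proof (rule the_equality)
  show "y \<in> V \<and> (\<forall>z\<in>V. norm (x - y) \<le> norm (x - z))"
    using assms near_min by blast
next
  fix y' assume "y' \<in> V \<and> (\<forall>z\<in>V. norm (x - y') \<le> norm (x - z))"
  then show "y' = y" using near_uniq[OF assms(2)] assms(1) by blast
qed

lemma parallelogram:
  fixes a b :: "'a::real_inner"
  shows "norm (a - b)^2 + norm (a + b)^2 = 2 * norm a ^2 + 2 * norm b ^2"
  by (simp add: power2_norm_eq_inner inner_diff_left inner_diff_right inner_add_left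
      inner_add_right inner_commute)

lemma variational:
  fixes a b :: real
  assumes "b \<ge> 0" "\<And>t. 2 * t * a \<le> t^2 * b"
  shows "a = 0"
proof -
  define t where "t = a / (b + 1)"
  have bp: "b + 1 > 0" using assms by simp
  have ta: "t * (b+1) = a" using bp by (simp add: t_def)
  have "2 * t * a * (b+1)^2 \<le> t^2 * b * (b+1)^2"
    by (rule mult_right_mono[OF assms(2)]) simp
  moreover have "2 * t * a * (b+1)^2 = 2 * a * (t * (b+1)) * (b+1)"
    by (simp add: power2_eq_square algebra_simps)
  moreover have "t^2 * b * (b+1)^2 = (t * (b+1))^2 * b"
    by (simp add: power2_eq_square algebra_simps)
  ultimately have "2 * a * a * (b+1) \<le> a^2 * b" using ta by simp
  then have "2 * a * a * (b+1) \<le> a * a * b" by (simp add: power2_eq_square)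
  then have "a * a * (b + 2) \<le> 0" by (simp add: algebra_simps)
  moreover have "b + 2 > 0" using assms by simp
  ultimately have "a * a \<le> 0" by (simp add: mult_le_0_iff)
  then show ?thesis by (metis antisym zero_le_square mult_eq_0_iff)
qed

lemma proj_exists:
  fixes V :: "'a::{real_inner,complete_space} set"
  assumes "subspace V" "closed V"
  shows "\<exists>y\<in>V. \<forall>z\<in>V. inner (x - y) z = 0"
proof -
  define D where "D = (\<lambda>v. norm (x - v)^2) ` V"
  define d where "d = Inf D"
  have "0 \<in> V" using assms(1) by (simp add: subspace_0)
  then have Dne: "D \<noteq> {}" unfolding D_def by auto
  have bdd: "bdd_below D" unfolding D_def by (rule bdd_belowI[of _ 0]) auto
  have dle: "d \<le> norm (x - v)^2" if "v \<in> V" for v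
    unfolding d_def D_def using bdd that by (auto intro!: cInf_lower simp: D_def)
  have "\<exists>v\<in>V. norm (x - v)^2 < d + 1 / real (Suc n)" for n
  proof -
    have "Inf D < d + 1 / real (Suc n)" unfolding d_def by simp
    then obtain w where "w \<in> D" "w < d + 1 / real (Suc n)"
      using cInf_lessD[OF Dne] by blast
    then show ?thesis unfolding D_def by auto
  qed
  then obtain f where f: "\<And>n. f n \<in> V" "\<And>n. norm (x - f n)^2 < d + 1 / real (Suc n)"
    by metis
  have fdiff: "norm (f n - f m)^2 \<le> 2 / real (Suc n) + 2 / real (Suc m)" for n m
  proof -
    have mid: "(1/2) *\<^sub>R (f n + f m) \<in> V"
      using assms(1) f(1) by (simp add: subspace_add subspace_scale)
    have "d \<le> norm (x - (1/2) *\<^sub>R (f n + f m))^2" by (rule dle[OF mid])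
    moreover have "(x - f n) + (x - f m) = 2 *\<^sub>R (x - (1/2) *\<^sub>R (f n + f m))"
      by (simp add: algebra_simps scaleR_2)
    then have "norm ((x - f n) + (x - f m))^2 = 4 * norm (x - (1/2) *\<^sub>R (f n + f m))^2"
      by (simp add: power2_eq_square)
    moreover have eq: "(x - f n) - (x - f m) = f m - f n" by simp
    have "norm ((x - f n) - (x - f m))^2 = norm (f m - f n)^2" by (simp only: eq)
    moreover note calculation
    moreover note parallelogram[of "x - f n" "x - f m"] f(2)[of n] f(2)[of m]
    ultimately have "norm (f m - f n)^2 \<le> 2 / real (Suc n) + 2 / real (Suc m)"
      by linarith
    then show ?thesis by (simp add: norm_minus_commute)
  qed
  have "Cauchy f"
  proof (rule metric_CauchyI)
    fix \<epsilon> :: real assume ep: "\<epsilon> > 0"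
    obtain M :: nat where M: "4 / \<epsilon>^2 < real M" using reals_Archimedean2 by blast
    have "\<forall>m\<ge>M. \<forall>n\<ge>M. dist (f m) (f n) < \<epsilon>"
    proof (intro allI impI)
      fix m n assume mn: "m \<ge> M" "n \<ge> M"
      have "2 / real (Suc m) \<le> 2 / real (Suc M)" "2 / real (Suc n) \<le> 2 / real (Suc M)"
        using mn by (auto intro!: divide_left_mono)
      moreover have "4 / real (Suc M) < \<epsilon>^2"
      proof -
        have e2: "\<epsilon>^2 > 0" using ep by simp
        have "4 < real M * \<epsilon>^2" using M e2 by (simp add: field_simps)
        moreover have "real M * \<epsilon>^2 \<le> real (Suc M) * \<epsilon>^2" by (rule mult_right_mono) auto
        ultimately have "4 < real (Suc M) * \<epsilon>^2" by linarith
        then show ?thesis by (simp add: field_simps)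
      qed
      ultimately have "norm (f m - f n)^2 < \<epsilon>^2" using fdiff[of m n] by linarith
      then show "dist (f m) (f n) < \<epsilon>" using ep
        by (simp add: dist_norm power_less_imp_less_base)
    qed
    then show "\<exists>M. \<forall>m\<ge>M. \<forall>n\<ge>M. dist (f m) (f n) < \<epsilon>" by blast
  qed
  then obtain y where fy: "f \<longlonglongrightarrow> y" using Cauchy_convergent_iff convergent_def by blast
  have yV: "y \<in> V" using closed_sequentially[OF assms(2) f(1) fy] .
  have "(\<lambda>n. norm (x - f n)^2) \<longlonglongrightarrow> norm (x - y)^2"
    by (intro tendsto_intros fy)
  moreover have "(\<lambda>n. d + 1 / real (Suc n)) \<longlonglongrightarrow> d + 0"
    by (intro tendsto_intros LIMSEQ_inverse_real_of_nat[unfolded inverse_eq_divide])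
  ultimately have "norm (x - y)^2 \<le> d"
    using f(2) by (intro LIMSEQ_le[of "\<lambda>n. norm (x - f n)^2" _ "\<lambda>n. d + 1 / real (Suc n)"])
      (auto intro: less_imp_le)
  then have ymin: "norm (x - y)^2 \<le> norm (x - v)^2" if "v \<in> V" for v
    using dle[OF that] by linarith
  have "inner (x - y) z = 0" if zV: "z \<in> V" for z
  proof (rule variational[of "norm z ^2"])
    fix t :: real
    have "y + t *\<^sub>R z \<in> V" using assms(1) yV zV by (simp add: subspace_add subspace_scale)
    then have "norm (x - y)^2 \<le> norm ((x - y) - t *\<^sub>R z)^2" using ymin by (simp add: algebra_simps)
    also have "\<dots> = norm (x - y)^2 - 2 * t * inner (x - y) z + t^2 * norm z ^2"
      unfolding power2_norm_eq_inner by (simp add: inner_diff_left inner_diff_right inner_commute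
          power2_eq_square algebra_simps)
    finally show "2 * t * inner (x - y) z \<le> t^2 * norm z^2" by simp
  qed simp
  then show ?thesis using yV by blast
qed



locale onsys =
  fixes Z :: "'z set" and e :: "'z \<Rightarrow> 'a::{real_inner,complete_space}"
  assumes orth: "\<And>j k. j \<in> Z \<Longrightarrow> k \<in> Z \<Longrightarrow> inner (e j) (e k) = (if j = k then 1 else 0)"
begin

definition coef :: "'a \<Rightarrow> 'z \<Rightarrow> real" where
  "coef u = (\<lambda>k. if k \<in> Z then inner u (e k) else 0)"

definition syn :: "('z \<Rightarrow> real) \<Rightarrow> 'a" where
  "syn c = infsum (\<lambda>k. c k *\<^sub>R e k) Z"

lemma coef_diff: "coef (u - v) = coef u - coef v"
  by (auto simp: coef_def inner_diff_left)
lemma coef_add: "coef (u + v) = (\<lambda>k. coef u k + coef v k)"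
  by (auto simp: coef_def inner_add_left)
lemma coef_scale: "coef (r *\<^sub>R u) = (\<lambda>k. r * coef u k)"
  by (auto simp: coef_def)
lemma coef_0: "coef 0 = (\<lambda>k. 0)"
  by (auto simp: coef_def)

lemma fin_inner_sum:
  assumes "finite F" "F \<subseteq> Z"
  shows "inner (\<Sum>j\<in>F. c j *\<^sub>R e j) (\<Sum>k\<in>F. c k *\<^sub>R e k) = (\<Sum>k\<in>F. (c k)^2)"
proof -
  have "inner (\<Sum>j\<in>F. c j *\<^sub>R e j) (\<Sum>k\<in>F. c k *\<^sub>R e k)
      = (\<Sum>j\<in>F. \<Sum>k\<in>F. inner (c j *\<^sub>R e j) (c k *\<^sub>R e k))"
    unfolding inner_sum_left inner_sum_right by (rule sum.swap)
  also have "\<dots> = (\<Sum>j\<in>F. \<Sum>k\<in>F. if j = k then c j * c k else 0)"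
    using assms(2) by (intro sum.cong refl) (auto simp: orth subset_iff)
  also have "\<dots> = (\<Sum>k\<in>F. (c k)^2)"
    using assms(1) by (simp add: power2_eq_square)
  finally show ?thesis .
qed

lemma fin_norm_sum:
  assumes "finite F" "F \<subseteq> Z"
  shows "norm (\<Sum>k\<in>F. c k *\<^sub>R e k)^2 = (\<Sum>k\<in>F. (c k)^2)"
  using fin_inner_sum[OF assms] by (simp add: power2_norm_eq_inner)

lemma fin_bessel:
  assumes "finite F" "F \<subseteq> Z"
  shows "(\<Sum>k\<in>F. (inner u (e k))^2) \<le> norm u ^2"
proof -
  define p where "p = (\<Sum>k\<in>F. inner u (e k) *\<^sub>R e k)"
  have up: "inner u p = (\<Sum>k\<in>F. (inner u (e k))^2)"
    unfolding p_def by (simp add: inner_sum_right power2_eq_square)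
  have pp: "inner p p = (\<Sum>k\<in>F. (inner u (e k))^2)"
    unfolding p_def by (rule fin_inner_sum[OF assms])
  have "0 \<le> inner (u - p) (u - p)" by simp
  also have "\<dots> = inner u u - 2 * inner u p + inner p p"
    by (simp add: inner_diff_left inner_diff_right inner_commute)
  finally show ?thesis using up pp by (simp add: power2_norm_eq_inner)
qed

lemma coef_sq_summable: "(\<lambda>k. (coef u k)^2) summable_on Z"
proof (rule nonneg_bdd_above_summable_on)
  show "bdd_above (sum (\<lambda>k. (coef u k)^2) ` {F. F \<subseteq> Z \<and> finite F})"
  proof (rule bdd_aboveI[of _ "norm u ^2"])
    fix x assume "x \<in> sum (\<lambda>k. (coef u k)^2) ` {F. F \<subseteq> Z \<and> finite F}"
    then obtain F where F: "F \<subseteq> Z" "finite F" "x = (\<Sum>k\<in>F. (coef u k)^2)" by auto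
    have "x = (\<Sum>k\<in>F. (inner u (e k))^2)" using F by (auto simp: coef_def intro!: sum.cong)
    then show "x \<le> norm u ^2" using fin_bessel F by simp
  qed
qed simp

lemma coef_l2: "coef u \<in> l2 Z"
  unfolding l2_def using coef_sq_summable by (auto simp: coef_def)

lemma bessel: "(\<Sum>\<^sub>\<infinity>k\<in>Z. (coef u k)^2) \<le> norm u ^2"
proof (rule infsum_le_finite_sums[OF coef_sq_summable])
  fix F assume F: "finite F" "F \<subseteq> Z"
  have "(\<Sum>k\<in>F. (coef u k)^2) = (\<Sum>k\<in>F. (inner u (e k))^2)" using F by (auto simp: coef_def intro!: sum.cong)
  then show "(\<Sum>k\<in>F. (coef u k)^2) \<le> norm u ^2" using fin_bessel F by simp
qed

lemma l2_summable: "c \<in> l2 Z \<Longrightarrow> (\<lambda>k. (c k)^2) summable_on Z"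
  by (simp add: l2_def)

lemma syn_summable:
  assumes "c \<in> l2 Z"
  shows "(\<lambda>k. c k *\<^sub>R e k) summable_on Z"
proof -
  define f where "f = (\<lambda>k. c k *\<^sub>R e k)"
  from l2_summable[OF assms] obtain L where lim: "(sum (\<lambda>k. (c k)^2) \<longlongrightarrow> L) (finite_subsets_at_top Z)"
    unfolding has_sum_def summable_on_def by blast
  have "\<exists>P. eventually P (finite_subsets_at_top Z) \<and>
              (\<forall>F F'. P F \<and> P F' \<longrightarrow> dist (sum f F) (sum f F') < \<epsilon>)" if "\<epsilon>>0" for \<epsilon>
  proof -
    define d P where "d = \<epsilon>^2/8" and "P F \<longleftrightarrow> finite F \<and> F \<subseteq> Z \<and> dist (sum (\<lambda>k. (c k)^2) F) L < d" for F
    have "d > 0" using that unfolding d_def by simp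
    have ev_P: "eventually P (finite_subsets_at_top Z)"
      using lim
      by (auto simp add: P_def[abs_def] \<open>0 < d\<close> eventually_conj_iff eventually_finite_subsets_at_top_weakI tendsto_iff)
    moreover have "dist (sum f F1) (sum f F2) < \<epsilon>" if "P F1" and "P F2" for F1 F2
    proof -
      from ev_P
      obtain F' where "finite F'" and "F' \<subseteq> Z" and P_sup_F': "finite F \<and> F \<supseteq> F' \<and> F \<subseteq> Z \<Longrightarrow> P F" for F
        by atomize_elim (simp add: eventually_finite_subsets_at_top)
      define F where "F = F' \<union> F1 \<union> F2"
      have "finite F1" "F1 \<subseteq> Z" "finite F2" "F2 \<subseteq> Z" using that unfolding P_def by auto
      then have "finite F" and "F \<subseteq> Z"
        unfolding F_def using \<open>finite F'\<close> \<open>F' \<subseteq> Z\<close> by auto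
      have "P F" by (rule P_sup_F') (use \<open>finite F\<close> \<open>F \<subseteq> Z\<close> in \<open>auto simp: F_def\<close>)
      then have dist_F: "dist (sum (\<lambda>k. (c k)^2) F) L < d" unfolding P_def by blast
      have dist_F_subset: "dist (sum f F) (sum f G) < \<epsilon>/2" if G: "G \<subseteq> F" "P G" for G
      proof -
        have "dist (sum f F) (sum f G) = norm (sum f (F-G))"
          unfolding dist_norm using \<open>finite F\<close> G(1) by (simp add: sum_diff)
        moreover have "norm (sum f (F-G))^2 = (\<Sum>k\<in>F-G. (c k)^2)"
          unfolding f_def using \<open>finite F\<close> \<open>F \<subseteq> Z\<close> by (intro fin_norm_sum) auto
        moreover have "(\<Sum>k\<in>F-G. (c k)^2) = (\<Sum>k\<in>F. (c k)^2) - (\<Sum>k\<in>G. (c k)^2)"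
          using \<open>finite F\<close> G(1) by (simp add: sum_diff)
        moreover have "(\<Sum>k\<in>F. (c k)^2) - (\<Sum>k\<in>G. (c k)^2) < 2 * d"
        proof -
          have "dist (sum (\<lambda>k. (c k)^2) G) L < d" using G(2) unfolding P_def by blast
          then show ?thesis using dist_F unfolding dist_real_def by linarith
        qed
        moreover have "(\<epsilon>/2)^2 = 2 * d" unfolding d_def by (simp add: power_divide)
        ultimately have "norm (sum f (F-G))^2 < (\<epsilon>/2)^2"
          by linarith
        then have "norm (sum f (F-G)) < \<epsilon>/2"
          by (rule power2_less_imp_less) (use \<open>\<epsilon> > 0\<close> in auto)
        then show ?thesis using \<open>dist (sum f F) (sum f G) = _\<close> by simp
      qed
      have "dist (sum f F1) (sum f F2) \<le> dist (sum f F) (sum f F1) + dist (sum f F) (sum f F2)"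
        by (rule dist_triangle3)
      also have "\<dots> < \<epsilon>/2 + \<epsilon>/2"
        by (intro add_strict_mono dist_F_subset that) (auto simp: F_def)
      finally show "dist (sum f F1) (sum f F2) < \<epsilon>" by simp
    qed
    ultimately show ?thesis by blast
  qed
  then have "cauchy_filter (filtermap (sum f) (finite_subsets_at_top Z))"
    by (simp add: cauchy_filter_metric_filtermap)
  moreover have "complete (UNIV::'a set)"
    by (rule complete_UNIV)
  ultimately obtain L' where "(sum f \<longlongrightarrow> L') (finite_subsets_at_top Z)"
    using complete_uniform[where S=UNIV] by (force simp add: filterlim_def)
  then show ?thesis
    unfolding f_def using summable_on_def has_sum_def by blast
qed

lemma syn_has_sum: "c \<in> l2 Z \<Longrightarrow> ((\<lambda>k. c k *\<^sub>R e k) has_sum syn c) Z"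
  unfolding syn_def using syn_summable by (simp add: summable_iff_has_sum_infsum)

lemma inner_syn_has_sum:
  assumes "c \<in> l2 Z"
  shows "((\<lambda>k. c k * coef y k) has_sum inner (syn c) y) Z"
proof -
  have "((\<lambda>k. inner (c k *\<^sub>R e k) y) has_sum inner (syn c) y) Z"
    by (rule has_sum_bounded_linear[OF bounded_linear_inner_left syn_has_sum[OF assms]])
  then show ?thesis
    by (rule has_sum_cong[THEN iffD1, rotated]) (simp add: coef_def inner_commute)
qed

lemma inner_syn: "c \<in> l2 Z \<Longrightarrow> inner (syn c) y = (\<Sum>\<^sub>\<infinity>k\<in>Z. c k * coef y k)"
  using inner_syn_has_sum by (metis infsumI)

lemma coef_syn:
  assumes "c \<in> l2 Z"
  shows "coef (syn c) = c"
proof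
  fix k
  show "coef (syn c) k = c k"
  proof (cases "k \<in> Z")
    case True
    have "((\<lambda>j. c j * coef (e k) j) has_sum inner (syn c) (e k)) Z"
      by (rule inner_syn_has_sum[OF assms])
    moreover have "((\<lambda>j. c j * coef (e k) j) has_sum c k) Z"
    proof -
      have "((\<lambda>j. c j * coef (e k) j) has_sum (\<Sum>j\<in>{k}. c j * coef (e k) j)) {k}"
        by (rule has_sum_finite) simp
      then have "((\<lambda>j. c j * coef (e k) j) has_sum c k) {k}"
        using True by (simp add: coef_def orth)
      then show ?thesis
        using True by (subst (asm) has_sum_cong_neutral[of Z "{k}"]) (auto simp: coef_def orth inner_commute)
    qed
    ultimately have "inner (syn c) (e k) = c k" using has_sum_unique by blast
    then show ?thesis using True by (simp add: coef_def)
  next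
    case False
    then show ?thesis using assms by (simp add: coef_def l2_def)
  qed
qed

lemma l2_iff: "c \<in> l2 Z \<longleftrightarrow> (\<exists>u. c = coef u)"
  using coef_syn coef_l2 by metis

lemma norm_syn_sq: "c \<in> l2 Z \<Longrightarrow> norm (syn c)^2 = (\<Sum>\<^sub>\<infinity>k\<in>Z. (c k)^2)"
proof -
  assume c: "c \<in> l2 Z"
  have "norm (syn c)^2 = inner (syn c) (syn c)" by (simp add: power2_norm_eq_inner)
  also have "\<dots> = (\<Sum>\<^sub>\<infinity>k\<in>Z. c k * c k)" using inner_syn[OF c, of "syn c"] coef_syn[OF c] by simp
  finally show ?thesis by (simp add: power2_eq_square)
qed

lemma l2norm_syn: "c \<in> l2 Z \<Longrightarrow> l2norm Z c = norm (syn c)"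
  unfolding l2norm_def using norm_syn_sq by (metis norm_ge_zero real_sqrt_abs abs_of_nonneg)

lemma syn_diff:
  assumes "c \<in> l2 Z" "d \<in> l2 Z"
  shows "syn (c - d) = syn c - syn d"
proof -
  have "((\<lambda>k. c k *\<^sub>R e k - d k *\<^sub>R e k) has_sum (syn c - syn d)) Z"
    by (rule has_sum_diff'[OF syn_has_sum[OF assms(1)] syn_has_sum[OF assms(2)]])
  then show ?thesis unfolding syn_def by (simp add: infsumI scaleR_diff_left)
qed

lemma syn_add:
  assumes "c \<in> l2 Z" "d \<in> l2 Z"
  shows "syn (\<lambda>k. c k + d k) = syn c + syn d"
proof -
  have "((\<lambda>k. c k *\<^sub>R e k + d k *\<^sub>R e k) has_sum (syn c + syn d)) Z"
    by (rule has_sum_add[OF syn_has_sum[OF assms(1)] syn_has_sum[OF assms(2)]])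
  then show ?thesis unfolding syn_def by (simp add: infsumI scaleR_add_left)
qed

lemma syn_scale: "syn (\<lambda>k. r * c k) = r *\<^sub>R syn c"
  unfolding syn_def by (simp add: infsum_scaleR_right[symmetric] scaleR_scaleR)

lemma syn_0: "syn (\<lambda>k. 0) = 0"
  unfolding syn_def by simp

end


locale setting = onsys Z e for Z :: "'z set" and e :: "'z \<Rightarrow> 'a::{real_inner,complete_space}" +
  fixes A :: "'a set" and shat :: "'z \<Rightarrow> real" and u0 :: 'a
  assumes subA: "subspace A" and clA: "closed A" and clR: "l2_closed Z (coef ` A)"
    and shat: "shat \<in> l2 Z" and u0A: "u0 \<in> A"
begin

definition PA where "PA = nearest A"

lemma PA: "PA x \<in> A" "\<And>z. z \<in> A \<Longrightarrow> inner (x - PA x) z = 0"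
proof -
  obtain y where y: "y \<in> A" "\<forall>z\<in>A. inner (x - y) z = 0" using proj_exists[OF subA clA] by blast
  have "PA x = y" unfolding PA_def
    by (rule nearest_char) (use y subA in \<open>auto simp: subspace_diff\<close>)
  then show "PA x \<in> A" "\<And>z. z \<in> A \<Longrightarrow> inner (x - PA x) z = 0" using y by auto
qed

lemma PA_char: "y \<in> A \<Longrightarrow> (\<And>z. z \<in> A \<Longrightarrow> inner (x - y) z = 0) \<Longrightarrow> PA x = y"
  unfolding PA_def by (rule nearest_char) (use subA in \<open>auto simp: subspace_diff\<close>)

lemma PA_id: "a \<in> A \<Longrightarrow> PA a = a"
  by (rule PA_char) auto

lemma PA_inner: "a \<in> A \<Longrightarrow> inner (PA x) a = inner x a"
  using PA(2)[of a x] by (simp add: inner_diff_left)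

lemma PA_diff: "PA (x - y) = PA x - PA y"
proof (rule PA_char)
  show "PA x - PA y \<in> A" using PA subA by (simp add: subspace_diff)
  fix z assume "z \<in> A"
  have "inner (x - y - (PA x - PA y)) z = inner (x - PA x) z - inner (y - PA y) z"
    by (simp add: inner_diff_left)
  then show "inner (x - y - (PA x - PA y)) z = 0" using PA(2)[OF \<open>z \<in> A\<close>] by simp
qed

lemma PA_add: "PA (x + y) = PA x + PA y"
proof (rule PA_char)
  show "PA x + PA y \<in> A" using PA subA by (simp add: subspace_add)
  fix z assume "z \<in> A"
  have "inner (x + y - (PA x + PA y)) z = inner (x - PA x) z + inner (y - PA y) z"
    by (simp add: inner_diff_left inner_add_left)
  then show "inner (x + y - (PA x + PA y)) z = 0" using PA(2)[OF \<open>z \<in> A\<close>] by simp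
qed

lemma PA_zero: "(\<And>a. a \<in> A \<Longrightarrow> inner w a = 0) \<Longrightarrow> PA w = 0"
  by (rule PA_char) (use subA in \<open>auto simp: subspace_0\<close>)

lemma PA_norm: "norm (PA x) \<le> norm x"
proof -
  have "inner (x - PA x) (0 - PA x) = 0" using PA(2)[of "PA x" x] PA(1) by simp
  from pyth_orth[OF this] have "norm x ^2 = norm (x - PA x)^2 + norm (PA x)^2" by simp
  then have "norm (PA x)^2 \<le> norm x ^2" by simp
  then show ?thesis by (simp add: power2_le_iff_abs_le)
qed

definition M where "M u = syn (coef u)"

lemma coef_M: "coef (M u) = coef u"
  unfolding M_def by (rule coef_syn[OF coef_l2])

lemma M_diff: "M (u - v) = M u - M v"
  unfolding M_def coef_diff by (rule syn_diff[OF coef_l2 coef_l2])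

lemma M_add: "M (u + v) = M u + M v"
  unfolding M_def coef_add by (rule syn_add[OF coef_l2 coef_l2])

lemma M_scale: "M (r *\<^sub>R u) = r *\<^sub>R M u"
  unfolding M_def coef_scale by (rule syn_scale)

lemma M_0: "M 0 = 0"
  unfolding M_def coef_0 by (rule syn_0)

lemma inner_M: "inner (M u) w = (\<Sum>\<^sub>\<infinity>k\<in>Z. coef u k * coef w k)"
  unfolding M_def by (rule inner_syn[OF coef_l2])

lemma M_sym: "inner (M u) w = inner u (M w)"
  by (simp add: inner_M inner_commute[of u] mult.commute)

lemma M_self: "inner (M u) u = norm (M u)^2"
proof -
  have "norm (M u)^2 = inner (M u) (M u)" by (simp add: power2_norm_eq_inner)
  also have "\<dots> = inner (M u) u" by (simp add: inner_M coef_M)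
  finally show ?thesis by simp
qed

lemma l2norm_coef: "l2norm Z (coef u) = norm (M u)"
  unfolding M_def by (rule l2norm_syn[OF coef_l2])

lemma M_norm: "norm (M u) \<le> norm u"
proof -
  have "norm (M u)^2 = (\<Sum>\<^sub>\<infinity>k\<in>Z. (coef u k)^2)" unfolding M_def by (rule norm_syn_sq[OF coef_l2])
  also have "\<dots> \<le> norm u ^2" by (rule bessel)
  finally show ?thesis by (simp add: power2_le_iff_abs_le)
qed

lemma M_syn: "c \<in> l2 Z \<Longrightarrow> M (syn c) = syn c"
  unfolding M_def by (simp add: coef_syn)

lemma M_eq: "coef u = coef v \<Longrightarrow> M u = M v"
  unfolding M_def by simp

definition B where "B = M ` A"

lemma subB: "subspace B"
  unfolding subspace_def B_def
proof (intro conjI ballI allI)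
  show "0 \<in> M ` A" using subA M_0 by (metis image_eqI subspace_0)
next
  fix x y assume "x \<in> M ` A" "y \<in> M ` A"
  then obtain a b where "a \<in> A" "b \<in> A" "x = M a" "y = M b" by auto
  then show "x + y \<in> M ` A" using subA by (auto simp: M_add[symmetric] subspace_add)
next
  fix c :: real and x assume "x \<in> M ` A"
  then obtain a where "a \<in> A" "x = M a" by auto
  then show "c *\<^sub>R x \<in> M ` A" using subA by (auto simp: M_scale[symmetric] subspace_scale)
qed

lemma clB: "closed B"
proof (rule closed_sequential_limits[THEN iffD2], intro allI impI, elim conjE)
  fix f l assume fB: "\<forall>n. f n \<in> B" and fl: "f \<longlonglongrightarrow> l"
  have "\<forall>n. \<exists>b. b \<in> A \<and> f n = M b" using fB unfolding B_def by blast
  then obtain a where a': "\<forall>n. a n \<in> A \<and> f n = M (a n)" using choice[of "\<lambda>n b. b \<in> A \<and> f n = M b"] by blast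
  then have a: "\<And>n. a n \<in> A" "\<And>n. f n = M (a n)" by auto
  have n0: "(\<lambda>n. norm (f n - l)) \<longlonglongrightarrow> 0" using fl by (simp add: LIM_zero tendsto_norm_zero)
  have eq: "l2norm Z (coef (a n) - coef l) = norm (M (f n - l))" for n
  proof -
    have "coef (a n) - coef l = coef (f n - l)" by (simp add: a(2) coef_diff coef_M)
    then show ?thesis by (simp only: l2norm_coef)
  qed
  have lim0: "(\<lambda>n. l2norm Z (coef (a n) - coef l)) \<longlonglongrightarrow> 0"
  proof (rule tendsto_sandwich[OF _ _ tendsto_const n0])
    show "\<forall>\<^sub>F n in sequentially. 0 \<le> l2norm Z (coef (a n) - coef l)"
      unfolding eq by simp
    show "\<forall>\<^sub>F n in sequentially. l2norm Z (coef (a n) - coef l) \<le> norm (f n - l)"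
      unfolding eq using M_norm by simp
  qed
  have "coef l \<in> coef ` A"
    using clR unfolding l2_closed_def
  proof (elim allE[of _ "\<lambda>n. coef (a n)"] allE[of _ "coef l"] mp)
    show "(\<forall>n. coef (a n) \<in> coef ` A) \<and> coef l \<in> l2 Z \<and> (\<lambda>n. l2norm Z (coef (a n) - coef l)) \<longlonglongrightarrow> 0"
      using a(1) coef_l2 lim0 by blast
  qed
  then obtain a' where a': "a' \<in> A" "coef l = coef a'" by auto
  have eq2: "norm (f n - M a') = l2norm Z (coef (a n) - coef l)" for n
  proof -
    have "M a' = M l" using M_eq a'(2) by metis
    then have "f n - M a' = M (a n - l)" by (simp add: a(2) M_diff)
    moreover have "coef (a n) - coef l = coef (a n - l)" by (simp add: coef_diff)
    ultimately show ?thesis by (simp only: l2norm_coef)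
  qed
  have "(\<lambda>n. norm (f n - M a')) \<longlonglongrightarrow> 0" unfolding eq2 by (rule lim0)
  then have "f \<longlonglongrightarrow> M a'" by (simp add: tendsto_norm_zero_iff LIM_zero_iff)
  then have "l = M a'" using fl LIMSEQ_unique by blast
  then show "l \<in> B" unfolding B_def using a' by auto
qed

end


context setting
begin

lemma M_idem: "M (M u) = M u"
  by (rule M_eq) (simp add: coef_M)

lemma shat_coef: "coef (syn shat) = shat"
  by (rule coef_syn[OF shat])

lemma M_synshat: "M (syn shat) = syn shat"
  by (rule M_syn[OF shat])

lemma MB: "a \<in> A \<Longrightarrow> M a \<in> B"
  unfolding B_def by auto

definition L where "L = (SOME a. a \<in> A \<and> (\<forall>w\<in>B. inner (syn shat - M a) w = 0))"

lemma L_prop: "L \<in> A" "\<And>w. w \<in> B \<Longrightarrow> inner (syn shat - M L) w = 0"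
proof -
  obtain b where b: "b \<in> B" "\<forall>w\<in>B. inner (syn shat - b) w = 0"
    using proj_exists[OF subB clB] by blast
  then obtain a where "a \<in> A" "b = M a" unfolding B_def by auto
  then have "\<exists>a. a \<in> A \<and> (\<forall>w\<in>B. inner (syn shat - M a) w = 0)" using b by blast
  from someI_ex[OF this] show "L \<in> A" "\<And>w. w \<in> B \<Longrightarrow> inner (syn shat - M L) w = 0"
    unfolding L_def by auto
qed

lemma orthB: "\<forall>v\<in>B. inner (syn shat - M L) (v - M L) = 0"
  using L_prop subB MB by (simp add: subspace_diff)

lemma orthA: "a \<in> A \<Longrightarrow> inner (syn shat - M L) a = 0"
proof -
  assume a: "a \<in> A"
  have eq: "syn shat - M L = M (syn shat - L)" by (simp add: M_diff M_synshat)
  have "inner (syn shat - M L) a = inner (syn shat - L) (M a)" unfolding eq by (rule M_sym)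
  also have "\<dots> = inner (syn shat - L) (M (M a))" by (simp add: M_idem)
  also have "\<dots> = inner (syn shat - M L) (M a)" unfolding eq by (rule M_sym[symmetric])
  also have "\<dots> = 0" using L_prop(2) MB[OF a] by simp
  finally show ?thesis .
qed

lemma PA_g: "PA (syn shat - M L) = 0"
  by (rule PA_zero) (rule orthA)

definition R where "R y = y - PA (M y)"

lemma R_A: "y \<in> A \<Longrightarrow> R y \<in> A"
  unfolding R_def using PA(1) subA by (simp add: subspace_diff)

lemma R_diff: "R (y - w) = R y - R w"
  unfolding R_def by (simp add: M_diff PA_diff)

lemma R_sym: "y \<in> A \<Longrightarrow> w \<in> A \<Longrightarrow> inner (R y) w = inner y (R w)"
proof -
  assume y: "y \<in> A" and w: "w \<in> A"
  have "inner (R y) w = inner y w - inner (M y) w"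
    unfolding R_def by (simp add: inner_diff_left PA_inner[OF w])
  moreover have "inner y (R w) = inner y w - inner (M w) y"
    unfolding R_def by (simp add: inner_diff_right inner_commute[of y] PA_inner[OF y])
  moreover have "inner (M w) y = inner (M y) w"
    by (metis M_sym inner_commute)
  ultimately show ?thesis by simp
qed

lemma R_inner_self: "y \<in> A \<Longrightarrow> inner (R y) y = norm y ^2 - norm (M y)^2"
  unfolding R_def by (simp add: inner_diff_left PA_inner M_self power2_norm_eq_inner)

lemma R_le1: "y \<in> A \<Longrightarrow> inner (R y) y \<le> norm y ^2"
  using R_inner_self by simp

lemma R_le2: "y \<in> A \<Longrightarrow> norm (R y)^2 \<le> inner (R y) y"
proof -
  assume y: "y \<in> A"
  define P where "P = PA (M y)"
  have Py: "inner P y = norm (M y)^2" unfolding P_def using PA_inner[OF y] M_self by simp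
  have "norm (R y)^2 = inner (y - P) (y - P)" unfolding R_def P_def by (simp add: power2_norm_eq_inner)
  also have "\<dots> = norm y ^2 - 2 * inner P y + norm P ^2"
    by (simp add: inner_diff_left inner_diff_right inner_commute power2_norm_eq_inner)
  also have "\<dots> \<le> norm y ^2 - 2 * norm (M y)^2 + norm (M y)^2"
  proof -
    have "norm P \<le> norm (M y)" unfolding P_def by (rule PA_norm)
    then have "norm P ^2 \<le> norm (M y)^2" by (simp add: power_mono)
    then show ?thesis using Py by simp
  qed
  also have "\<dots> = inner (R y) y" using R_inner_self[OF y] by simp
  finally show ?thesis .
qed

lemma R_norm: "y \<in> A \<Longrightarrow> norm (R y) \<le> norm y"
proof -
  assume y: "y \<in> A"
  have "norm (R y)^2 \<le> norm y ^2" using R_le1[OF y] R_le2[OF y] by linarith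
  then show ?thesis by (simp add: power2_le_iff_abs_le)
qed

definition Cs where "Cs = {v. \<forall>k\<in>Z. coef v k = shat k}"

lemma coef_zero_iff: "(\<forall>k\<in>Z. coef v k = 0) \<longleftrightarrow> coef v = (\<lambda>k. 0)"
  by (auto simp: coef_def fun_eq_iff)

lemma PC: "nearest Cs v = v + (syn shat - M v)"
proof (rule nearest_char)
  define w where "w = v + (syn shat - M v)"
  have cw: "coef w = shat"
    unfolding w_def by (simp add: coef_add coef_diff coef_M shat_coef)
  then show "v + (syn shat - M v) \<in> Cs" unfolding Cs_def w_def[symmetric] by simp
  show "\<forall>z\<in>Cs. inner (v - (v + (syn shat - M v))) (z - (v + (syn shat - M v))) = 0"
  proof
    fix z assume "z \<in> Cs"
    then have "\<forall>k\<in>Z. coef (z - w) k = 0" using cw unfolding Cs_def by (simp add: coef_diff)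
    then have "coef (z - w) = (\<lambda>k. 0)" by (simp add: coef_zero_iff)
    then have Mz: "M (z - w) = 0" using M_eq[of "z - w" 0] by (simp add: coef_0 M_0)
    have "inner (v - w) (z - w) = - inner (M (syn shat - v)) (z - w)"
      unfolding w_def by (simp add: M_diff M_synshat inner_diff_left)
    also have "\<dots> = - inner (syn shat - v) (M (z - w))" by (simp add: M_sym)
    also have "\<dots> = 0" using Mz by simp
    finally show "inner (v - (v + (syn shat - M v))) (z - (v + (syn shat - M v))) = 0"
      unfolding w_def by simp
  qed
qed

lemma step: "u \<in> A \<Longrightarrow> (nearest A \<circ> nearest Cs) u = L + R (u - L)"
proof -
  assume u: "u \<in> A"
  have e1: "(nearest A \<circ> nearest Cs) u = PA (u + (syn shat - M u))" by (simp add: PC PA_def)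
  have e2: "syn shat - M u = (syn shat - M L) - M (u - L)" by (simp add: M_diff)
  have "(nearest A \<circ> nearest Cs) u = PA u + (PA (syn shat - M L) - PA (M (u - L)))"
    unfolding e1 e2 by (simp only: PA_add PA_diff)
  also have "\<dots> = u - PA (M (u - L))" by (simp add: PA_id[OF u] PA_g)
  also have "\<dots> = L + R (u - L)" unfolding R_def by simp
  finally show ?thesis .
qed

definition x0 where "x0 = u0 - L"
definition xs where "xs n = (R ^^ n) x0"

lemma x0A: "x0 \<in> A" unfolding x0_def using u0A L_prop(1) subA by (simp add: subspace_diff)

lemma xs_Suc: "xs (Suc n) = R (xs n)" unfolding xs_def by simp

lemma xsA: "xs n \<in> A"
  by (induction n) (auto simp: xs_Suc R_A x0A, simp add: xs_def x0A)

lemma iter: "((nearest A \<circ> nearest Cs) ^^ n) u0 = L + xs n"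
proof (induction n)
  case 0
  then show ?case by (simp add: xs_def x0_def)
next
  case (Suc n)
  have "L + xs n \<in> A" using L_prop(1) xsA subA by (simp add: subspace_add)
  from step[OF this] have "(nearest A \<circ> nearest Cs) (L + xs n) = L + xs (Suc n)" by (simp add: xs_Suc)
  then show ?case using Suc by simp
qed

lemma xs_inner: "inner (xs i) (xs j) = inner (xs (i + j)) x0"
proof (induction i arbitrary: j)
  case 0
  then show ?case by (simp add: xs_def inner_commute)
next
  case (Suc i)
  have "inner (xs (Suc i)) (xs j) = inner (xs i) (xs (Suc j))"
    by (simp add: xs_Suc R_sym xsA)
  also have "\<dots> = inner (xs (Suc i + j)) x0" using Suc by simp
  finally show ?case .
qed

definition aa where "aa k = inner (xs k) x0"

lemma aa_even: "aa (j + j) = norm (xs j)^2"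
proof -
  have "aa (j + j) = inner (xs j) (xs j)" unfolding aa_def by (rule xs_inner[symmetric])
  then show ?thesis by (simp only: power2_norm_eq_inner)
qed

lemma aa_odd: "aa (Suc (j + j)) = inner (R (xs j)) (xs j)"
proof -
  have "aa (Suc j + j) = inner (xs (Suc j)) (xs j)" unfolding aa_def by (rule xs_inner[symmetric])
  then show ?thesis by (simp only: xs_Suc add_Suc)
qed

lemma aa_dec: "aa (Suc k) \<le> aa k"
proof -
  have "\<exists>j. k = j + j \<or> k = Suc (j + j)" by presburger
  then obtain j where "k = j + j \<or> k = Suc (j + j)" by blast
  then show ?thesis
  proof
    assume k: "k = j + j"
    have "aa (Suc k) = inner (R (xs j)) (xs j)" unfolding k by (rule aa_odd)
    moreover have "aa k = norm (xs j)^2" unfolding k by (rule aa_even)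
    ultimately show ?thesis using R_le1[OF xsA] by simp
  next
    assume k: "k = Suc (j + j)"
    have "Suc k = Suc j + Suc j" using k by simp
    then have "aa (Suc k) = norm (xs (Suc j))^2" using aa_even by metis
    moreover have "aa k = inner (R (xs j)) (xs j)" unfolding k by (rule aa_odd)
    ultimately show ?thesis using R_le2[OF xsA] by (simp only: xs_Suc)
  qed
qed

lemma aa_nonneg: "0 \<le> aa k"
proof -
  have "\<exists>j. k = j + j \<or> k = Suc (j + j)" by presburger
  then obtain j where "k = j + j \<or> k = Suc (j + j)" by blast
  then show ?thesis
  proof
    assume k: "k = j + j"
    show ?thesis unfolding k aa_even by simp
  next
    assume k: "k = Suc (j + j)"
    have "0 \<le> norm (R (xs j))^2" by simp
    then show ?thesis unfolding k aa_odd using R_le2[OF xsA, of j] by linarith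
  qed
qed

lemma xs_dist: "norm (xs n - xs m)^2 = aa (n + n) + aa (m + m) - 2 * aa (n + m)"
proof -
  have "norm (xs n - xs m)^2 = inner (xs n) (xs n) - 2 * inner (xs n) (xs m) + inner (xs m) (xs m)"
    by (simp add: power2_norm_eq_inner inner_diff_left inner_diff_right inner_commute)
  moreover have "inner (xs n) (xs n) = aa (n + n)" "inner (xs m) (xs m) = aa (m + m)"
    "inner (xs n) (xs m) = aa (n + m)" unfolding aa_def by (rule xs_inner)+
  ultimately show ?thesis by simp
qed

lemma xs_conv: "\<exists>zl. xs \<longlonglongrightarrow> zl"
proof -
  have "decseq aa" by (simp add: decseq_Suc_iff aa_dec)
  then obtain \<alpha> where al: "aa \<longlonglongrightarrow> \<alpha>" using decseq_convergent[of aa 0] aa_nonneg by blast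
  have "Cauchy xs"
  proof (rule metric_CauchyI)
    fix \<epsilon> :: real assume ep: "\<epsilon> > 0"
    then have "\<epsilon>^2 / 4 > 0" by simp
    then obtain N where N: "\<And>k. k \<ge> N \<Longrightarrow> norm (aa k - \<alpha>) < \<epsilon>^2 / 4"
      using al unfolding LIMSEQ_iff by blast
    have "\<forall>m\<ge>N. \<forall>n\<ge>N. dist (xs m) (xs n) < \<epsilon>"
    proof (intro allI impI)
      fix m n assume mn: "m \<ge> N" "n \<ge> N"
      have "\<bar>aa (m+m) - \<alpha>\<bar> < \<epsilon>^2/4" "\<bar>aa (n+n) - \<alpha>\<bar> < \<epsilon>^2/4" "\<bar>aa (m+n) - \<alpha>\<bar> < \<epsilon>^2/4"
        using N[of "m+m"] N[of "n+n"] N[of "m+n"] mn by auto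
      then have "norm (xs m - xs n)^2 < \<epsilon>^2" unfolding xs_dist by linarith
      then show "dist (xs m) (xs n) < \<epsilon>" unfolding dist_norm
        by (rule power2_less_imp_less) (use ep in auto)
    qed
    then show "\<exists>M. \<forall>m\<ge>M. \<forall>n\<ge>M. dist (xs m) (xs n) < \<epsilon>" by blast
  qed
  then show ?thesis using Cauchy_convergent_iff convergent_def by blast
qed

definition zl where "zl = lim xs"

lemma xs_lim: "xs \<longlonglongrightarrow> zl"
  unfolding zl_def using xs_conv convergent_LIMSEQ_iff convergent_def by blast

lemma zlA: "zl \<in> A"
  using closed_sequentially[OF clA _ xs_lim] xsA by blast

lemma R_zl: "R zl = zl"
proof -
  have "(\<lambda>n. norm (R (xs n) - R zl)) \<longlonglongrightarrow> 0"
  proof (rule tendsto_sandwich[OF _ _ tendsto_const])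
    show "(\<lambda>n. norm (xs n - zl)) \<longlonglongrightarrow> 0" using xs_lim by (simp add: LIM_zero tendsto_norm_zero)
    show "\<forall>\<^sub>F n in sequentially. 0 \<le> norm (R (xs n) - R zl)" by simp
    have "norm (R (xs n) - R zl) \<le> norm (xs n - zl)" for n
      unfolding R_diff[symmetric] using xsA zlA subA by (intro R_norm) (simp add: subspace_diff)
    then show "\<forall>\<^sub>F n in sequentially. norm (R (xs n) - R zl) \<le> norm (xs n - zl)" by simp
  qed
  then have "(\<lambda>n. R (xs n)) \<longlonglongrightarrow> R zl" by (simp add: tendsto_norm_zero_iff LIM_zero_iff)
  moreover have "(\<lambda>n. R (xs n)) \<longlonglongrightarrow> zl"
    unfolding xs_Suc[symmetric] by (rule LIMSEQ_Suc[OF xs_lim])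
  ultimately show ?thesis using LIMSEQ_unique by blast
qed

lemma coef_zl: "coef zl = (\<lambda>k. 0)"
proof -
  have P0: "PA (M zl) = 0" using R_zl unfolding R_def by simp
  have "norm (M zl)^2 = inner (M zl) zl" by (simp add: M_self)
  also have "\<dots> = inner (PA (M zl)) zl" by (simp add: PA_inner[OF zlA])
  also have "\<dots> = 0" using P0 by simp
  finally have "M zl = 0" by simp
  then show ?thesis using coef_M[of zl] by (simp add: coef_0)
qed

lemma ker_orth: "w \<in> A \<Longrightarrow> coef w = (\<lambda>k. 0) \<Longrightarrow> inner zl w = inner x0 w"
proof -
  assume w: "w \<in> A" "coef w = (\<lambda>k. 0)"
  have "M w = 0" using M_eq[of w 0] w(2) by (simp add: coef_0 M_0)
  then have Rw: "R w = w" unfolding R_def using PA_id subA by (simp add: subspace_0)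
  have c: "inner (xs n) w = inner x0 w" for n
  proof (induction n)
    case 0 then show ?case by (simp add: xs_def)
  next
    case (Suc n)
    have "inner (xs (Suc n)) w = inner (xs n) (R w)" by (simp add: xs_Suc R_sym[OF xsA w(1)])
    then show ?case using Suc Rw by simp
  qed
  have "(\<lambda>n. inner (xs n) w) \<longlonglongrightarrow> inner zl w" by (intro tendsto_intros xs_lim)
  then have "(\<lambda>n. inner x0 w) \<longlonglongrightarrow> inner zl w" by (simp add: c)
  then show ?thesis using LIMSEQ_unique tendsto_const by blast
qed

definition U where "U = L + zl"

lemma UA: "U \<in> A" unfolding U_def using L_prop(1) zlA subA by (simp add: subspace_add)

lemma coef_U: "coef U = coef L"
  unfolding U_def by (simp add: coef_add coef_zl)

lemma iter_lim: "(\<lambda>n. ((nearest A \<circ> nearest Cs) ^^ n) u0) \<longlonglongrightarrow> U"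
  unfolding iter U_def by (intro tendsto_intros xs_lim)

lemma l2n: "l2norm Z (shat - coef a) = norm (syn shat - M a)"
proof -
  have "shat - coef a = coef (syn shat - a)" by (simp add: coef_diff shat_coef)
  then show ?thesis by (simp add: l2norm_coef M_diff M_synshat)
qed

lemma q_eq: "l2_proj Z (coef ` A) shat = coef L"
  unfolding l2_proj_def
proof (rule the_equality)
  show "coef L \<in> coef ` A \<and> (\<forall>r\<in>coef ` A. l2norm Z (shat - coef L) \<le> l2norm Z (shat - r))"
    using L_prop(1) near_min[OF orthB MB] by (auto simp: l2n)
next
  fix q assume q: "q \<in> coef ` A \<and> (\<forall>r\<in>coef ` A. l2norm Z (shat - q) \<le> l2norm Z (shat - r))"
  then obtain a where a: "a \<in> A" "q = coef a" by auto
  then have "norm (syn shat - M a) \<le> norm (syn shat - M L)"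
    using q L_prop(1) by (auto simp: l2n)
  then have "M a = M L" using near_uniq[OF orthB MB[OF a(1)]] by simp
  then show "q = coef L" using a coef_M by metis
qed

definition Cq where "Cq = {v. \<forall>k\<in>Z. coef v k = coef L k}"

lemma UCq: "U \<in> A \<inter> Cq" using UA coef_U unfolding Cq_def by simp

lemma diff_ker: "V \<in> A \<inter> Cq \<Longrightarrow> coef (V - U) = (\<lambda>k. 0)"
proof -
  assume V: "V \<in> A \<inter> Cq"
  have "\<forall>k\<in>Z. coef (V - U) k = 0" using V unfolding Cq_def by (simp add: coef_diff coef_U)
  then show ?thesis by (simp add: coef_zero_iff)
qed

lemma near_U: "nearest (A \<inter> Cq) u0 = U"
proof (rule nearest_char[OF UCq], intro ballI)
  fix V assume V: "V \<in> A \<inter> Cq"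
  have VU: "V - U \<in> A" using V UA subA by (simp add: subspace_diff)
  have "u0 - U = x0 - zl" unfolding U_def x0_def by simp
  then show "inner (u0 - U) (V - U) = 0"
    using ker_orth[OF VU diff_ker[OF V]] by (simp add: inner_diff_left)
qed

definition cc where "cc = shat - coef u0"
definition Ms where "Ms = {v \<in> A. \<forall>w\<in>A. l2norm Z (coef v - cc) \<le> l2norm Z (coef w - cc)}"

lemma l2n2: "l2norm Z (coef w - cc) = norm (syn shat - M (w + u0))"
proof -
  have "coef w - cc = coef (w + u0 - syn shat)"
    unfolding cc_def by (simp add: coef_diff coef_add shat_coef fun_eq_iff)
  then have "l2norm Z (coef w - cc) = norm (M (w + u0) - syn shat)"
    by (simp add: l2norm_coef M_diff M_synshat)
  then show ?thesis by (simp add: norm_minus_commute)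
qed

definition v0 where "v0 = U - u0"

lemma v0_eq: "v0 = zl - x0" unfolding v0_def U_def x0_def by simp

lemma v0A: "v0 \<in> A" unfolding v0_def using UA u0A subA by (simp add: subspace_diff)

lemma M_v0: "M (v0 + u0) = M L"
  using M_eq[OF coef_U] unfolding v0_def by simp

lemma v0_Ms: "v0 \<in> Ms"
proof -
  have "\<forall>w\<in>A. l2norm Z (coef v0 - cc) \<le> l2norm Z (coef w - cc)"
  proof
    fix w assume "w \<in> A"
    then have "w + u0 \<in> A" using u0A subA by (simp add: subspace_add)
    then show "l2norm Z (coef v0 - cc) \<le> l2norm Z (coef w - cc)"
      unfolding l2n2 M_v0 by (rule near_min[OF orthB MB])
  qed
  then show ?thesis unfolding Ms_def using v0A by simp
qed

lemma Ms_pyth: "w \<in> Ms \<Longrightarrow> norm w ^2 = norm v0 ^2 + norm (w - v0)^2"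
proof -
  assume w: "w \<in> Ms"
  then have wA: "w \<in> A" unfolding Ms_def by auto
  have "norm (syn shat - M (w + u0)) \<le> norm (syn shat - M (v0 + u0))"
    using w v0A unfolding Ms_def l2n2 by auto
  then have "norm (syn shat - M (w + u0)) \<le> norm (syn shat - M L)" by (simp only: M_v0)
  then have "M (w + u0) = M L"
    using near_uniq[OF orthB MB] wA u0A subA by (simp add: subspace_add)
  then have "coef (w + u0) = coef U" using coef_M coef_U by metis
  moreover have "w - v0 = (w + u0) - U" unfolding v0_def by simp
  ultimately have "coef (w - v0) = coef U - coef U" by (simp only: coef_diff)
  then have ck: "coef (w - v0) = (\<lambda>k. 0)" by (simp add: fun_eq_iff)
  have wv: "w - v0 \<in> A" using wA v0A subA by (simp add: subspace_diff)
  have "inner (0 - v0) (w - v0) = 0"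
    using ker_orth[OF wv ck] by (simp add: v0_eq inner_diff_left)
  from pyth_orth[OF this] show ?thesis by simp
qed

lemma pinv: "(THE v. v \<in> Ms \<and> (\<forall>w\<in>Ms. norm v \<le> norm w)) = v0"
proof (rule the_equality)
  show "v0 \<in> Ms \<and> (\<forall>w\<in>Ms. norm v0 \<le> norm w)"
  proof (intro conjI ballI v0_Ms)
    fix w assume "w \<in> Ms"
    then have "norm v0 ^2 \<le> norm w ^2" using Ms_pyth by simp
    then show "norm v0 \<le> norm w" by (simp add: power2_le_iff_abs_le)
  qed
next
  fix v assume v: "v \<in> Ms \<and> (\<forall>w\<in>Ms. norm v \<le> norm w)"
  then have "norm v \<le> norm v0" using v0_Ms by blast
  then have "norm v ^2 \<le> norm v0 ^2" by (simp add: power_mono)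
  then have "norm (v - v0)^2 \<le> 0" using Ms_pyth v by simp
  then show "v = v0" by simp
qed

theorem main:
  "A \<inter> Cq \<noteq> {} \<and> (\<lambda>n. ((nearest A \<circ> nearest Cs) ^^ n) u0) \<longlonglongrightarrow> nearest (A \<inter> Cq) u0
   \<and> nearest (A \<inter> Cq) u0 = u0 + (THE v. v \<in> Ms \<and> (\<forall>w\<in>Ms. norm v \<le> norm w))"
  using UCq iter_lim near_U pinv unfolding v0_def by auto

end

theorem theorem1:
  fixes A :: "'a::{real_inner, complete_space} set"
    and Z :: "'z set" and h :: "'z \<Rightarrow> 'a" and s :: "'z \<Rightarrow> real" and u0 :: 'a
  assumes "subspace A" and "closed A"
    and "countable Z"
    and "\<forall>j\<in>Z. \<forall>k\<in>Z. j \<noteq> k \<longrightarrow> inner (h j) (h k) = 0"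
    and "\<forall>k\<in>Z. h k \<noteq> 0"
    and "l2_closed Z (Shat Z h ` A)"
    and "(\<lambda>k. if k \<in> Z then s k / norm (h k) else 0) \<in> l2 Z"
    and "u0 \<in> A"
  shows "let shat = (\<lambda>k. if k \<in> Z then s k / norm (h k) else 0);
             q = l2_proj Z (Shat Z h ` A) shat;
             sbar = (\<lambda>k. norm (h k) * q k);
             L = nearest (A \<inter> Cset Z h sbar) u0
         in A \<inter> Cset Z h sbar \<noteq> {}
            \<and> (\<lambda>n. ((nearest A \<circ> nearest (Cset Z h s)) ^^ n) u0) \<longlonglongrightarrow> L
            \<and> L = u0 + Shat_pinv A Z h (shat - Shat Z h u0)"
proof -
  define e where "e = (\<lambda>k. h k /\<^sub>R norm (h k))"
  define shat where "shat = (\<lambda>k. if k \<in> Z then s k / norm (h k) else 0)"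
  have hn: "\<And>k. k \<in> Z \<Longrightarrow> norm (h k) \<noteq> 0" using assms(5) by simp
  interpret O: onsys Z e
  proof
    fix j k assume jk: "j \<in> Z" "k \<in> Z"
    show "inner (e j) (e k) = (if j = k then 1 else 0)"
    proof (cases "j = k")
      case True
      have "inner (h k) (h k) = norm (h k)^2" by (simp add: power2_norm_eq_inner)
      then show ?thesis using True hn[OF jk(2)] unfolding e_def
        by (simp add: power2_eq_square field_simps)
    next
      case False
      then show ?thesis using assms(4) jk unfolding e_def by simp
    qed
  qed
  have ShatEq: "Shat Z h = O.coef"
  proof (rule ext)
    fix u show "Shat Z h u = O.coef u" unfolding O.coef_def unfolding Shat_def e_def by simp
  qed
  interpret S: setting Z e A shat u0
  proof
    show "subspace A" "closed A" "u0 \<in> A" by (fact assms(1), fact assms(2), fact assms(8))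
    show "l2_closed Z (O.coef ` A)" using assms(6) unfolding ShatEq .
    show "shat \<in> l2 Z" using assms(7) unfolding shat_def .
  qed
  have coefk: "O.coef v k = inner v (h k) / norm (h k)" if "k \<in> Z" for v k
    using that unfolding O.coef_def unfolding e_def by (simp add: divide_inverse mult.commute)
  have Cs: "Cset Z h s = S.Cs"
  proof -
    have "inner v (h k) = s k \<longleftrightarrow> O.coef v k = shat k" if "k \<in> Z" for v k
      using that hn[OF that] unfolding coefk[OF that] shat_def by (simp add: divide_cancel_right)
    then show ?thesis unfolding Cset_def S.Cs_def by auto
  qed
  have q: "l2_proj Z (Shat Z h ` A) shat = O.coef S.L"
    unfolding ShatEq by (rule S.q_eq)
  have Cq: "Cset Z h (\<lambda>k. norm (h k) * l2_proj Z (Shat Z h ` A) shat k) = S.Cq"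
  proof -
    have "inner v (h k) = norm (h k) * O.coef S.L k \<longleftrightarrow> O.coef v k = O.coef S.L k" if "k \<in> Z" for v k
      using that hn[OF that] unfolding coefk[OF that, of v] by (auto simp: field_simps)
    then show ?thesis unfolding Cset_def S.Cq_def q by auto
  qed
  have pinv: "Shat_pinv A Z h (shat - Shat Z h u0) = (THE v. v \<in> S.Ms \<and> (\<forall>w\<in>S.Ms. norm v \<le> norm w))"
    unfolding Shat_pinv_def Mset_def ShatEq S.Ms_def S.cc_def by (rule refl)
  have main: "A \<inter> Cset Z h (\<lambda>k. norm (h k) * l2_proj Z (Shat Z h ` A) shat k) \<noteq> {}
            \<and> (\<lambda>n. ((nearest A \<circ> nearest (Cset Z h s)) ^^ n) u0) \<longlonglongrightarrow> nearest (A \<inter> Cset Z h (\<lambda>k. norm (h k) * l2_proj Z (Shat Z h ` A) shat k)) u0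
            \<and> nearest (A \<inter> Cset Z h (\<lambda>k. norm (h k) * l2_proj Z (Shat Z h ` A) shat k)) u0 = u0 + Shat_pinv A Z h (shat - Shat Z h u0)"
    unfolding Cq Cs pinv by (rule S.main)
  show ?thesis unfolding Let_def shat_def[symmetric] using main by blast
qed

end
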